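(* Let $G=\mathbb Z$ with the discrete topology, $Y=(0,\infty)$, and $\theta$ the partial action with $Y_n=(\max\{0,n\},\infty)$ and $\theta_n(y)=n+y$ for $y\in Y_{-n}$. Let $X$ be a compact space and $\hat\theta$ the induced partial action on $C(X,Y)$, i.e. $C(X,Y)_n=\{f: f(x)>\max\{0,n\}\text{ for all }x\in X\}$ and $\hat\theta_n(f)=\theta_n\circ f=f+n$. Then the enveloping space $C(X,Y)_G$ of $\hat\theta$ is $G$-homeomorphic to $C(X,\mathbb R)$ (compact-open topology) with the global action $(n,F)\mapsto F+n$.
   Context: $C(X,Y)$ has the compact-open topology. The enveloping space is $C(X,Y)_G=(G\times C(X,Y))/R$ with the quotient topology, where $(n,f)R(m,g)$ iff $f\in C(X,Y)_{m-n}$ and $\hat\theta_{n-m}(f)=g$, with global action $k\cdot[n,f]=[k+n,f]$. A $G$-homeomorphism is a homeomorphism commuting with the actions. *)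

theory Defs
  imports "HOL-Analysis.Analysis" "HOL-Library.FuncSet"
begin

text \<open>C(X,Y): continuous maps X \<rightarrow> Y, represented extensionally
  (value undefined outside topspace X).\<close>
definition cmap_space :: "'a topology \<Rightarrow> 'b topology \<Rightarrow> ('a \<Rightarrow> 'b) set" where
  "cmap_space X Y = {f. continuous_map X Y f \<and> f \<in> extensional (topspace X)}"

definition compact_open :: "'a topology \<Rightarrow> 'b topology \<Rightarrow> ('a \<Rightarrow> 'b) topology" where
  "compact_open X Y =
     subtopology
       (topology_generated_by {{f. f ` K \<subseteq> U} | K U. compactin X K \<and> openin Y U})
       (cmap_space X Y)"

definition quotient_topology :: "'a topology \<Rightarrow> ('a \<Rightarrow> 'b) \<Rightarrow> 'b topology" where
  "quotient_topology T q =
     topology (\<lambda>U. U \<subseteq> q ` topspace T \<and> openin T {x \<in> topspace T. q x \<in> U})"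

text \<open>A partial action of \<int> on a space Z is given by domains D n (the set Z_n)
  and maps \<phi> n : D (-n) \<rightarrow> D n.\<close>
definition env_rel :: "(int \<Rightarrow> 'b set) \<Rightarrow> (int \<Rightarrow> 'b \<Rightarrow> 'b) \<Rightarrow> ((int \<times> 'b) \<times> (int \<times> 'b)) set" where
  "env_rel D \<phi> = {((n, f), (m, g)). f \<in> D (m - n) \<and> \<phi> (n - m) f = g}"

definition env_space :: "'b topology \<Rightarrow> (int \<Rightarrow> 'b set) \<Rightarrow> (int \<Rightarrow> 'b \<Rightarrow> 'b) \<Rightarrow> (int \<times> 'b) set topology" where
  "env_space Z D \<phi> =
     quotient_topology (prod_topology (discrete_topology (UNIV :: int set)) Z)
                       (\<lambda>p. env_rel D \<phi> `` {p})"

definition env_act :: "int \<Rightarrow> (int \<times> 'b) set \<Rightarrow> (int \<times> 'b) set" where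
  "env_act k c = (\<lambda>(n, f). (k + n, f)) ` c"

definition Ypos :: "real topology" where
  "Ypos = subtopology euclideanreal {0<..}"

definition CXY_dom :: "'a topology \<Rightarrow> int \<Rightarrow> ('a \<Rightarrow> real) set" where
  "CXY_dom X n = {f \<in> cmap_space X Ypos. \<forall>x \<in> topspace X. f x > max 0 (real_of_int n)}"

definition shift_fun :: "'a topology \<Rightarrow> int \<Rightarrow> ('a \<Rightarrow> real) \<Rightarrow> ('a \<Rightarrow> real)" where
  "shift_fun X n f = restrict (\<lambda>x. f x + real_of_int n) (topspace X)"

end

theory Submission
  imports Defs
begin

lemma qt_istop: "istopology (\<lambda>U. U \<subseteq> q ` topspace T \<and> openin T {x \<in> topspace T. q x \<in> U})"
  unfolding istopology_def
proof (intro conjI allI impI)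
  fix S U assume "S \<subseteq> q ` topspace T \<and> openin T {x \<in> topspace T. q x \<in> S}"
    "U \<subseteq> q ` topspace T \<and> openin T {x \<in> topspace T. q x \<in> U}"
  moreover have "{x \<in> topspace T. q x \<in> S \<inter> U} = {x \<in> topspace T. q x \<in> S} \<inter> {x \<in> topspace T. q x \<in> U}" by auto
  ultimately show "S \<inter> U \<subseteq> q ` topspace T" "openin T {x \<in> topspace T. q x \<in> S \<inter> U}"
    by auto
next
  fix K assume H: "\<forall>S\<in>K. S \<subseteq> q ` topspace T \<and> openin T {x \<in> topspace T. q x \<in> S}"
  have "{x \<in> topspace T. q x \<in> \<Union>K} = \<Union>((\<lambda>S. {x \<in> topspace T. q x \<in> S}) ` K)" by auto
  moreover have "openin T (\<Union>((\<lambda>S. {x \<in> topspace T. q x \<in> S}) ` K))"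
    using H by (intro openin_Union) auto
  ultimately show "\<Union>K \<subseteq> q ` topspace T" "openin T {x \<in> topspace T. q x \<in> \<Union>K}"
    using H by auto
qed

lemma qt_open: "openin (quotient_topology T q) U \<longleftrightarrow> U \<subseteq> q ` topspace T \<and> openin T {x \<in> topspace T. q x \<in> U}"
  unfolding quotient_topology_def using qt_istop[of q T] by (simp add: topology_inverse')

lemma qt_topspace: "topspace (quotient_topology T q) = q ` topspace T"
proof -
  have "{x \<in> topspace T. q x \<in> q ` topspace T} = topspace T" by auto
  then have "openin (quotient_topology T q) (q ` topspace T)" by (simp add: qt_open)
  then show ?thesis using openin_subset[of "quotient_topology T q"] qt_open
    by (metis (no_types, lifting) openin_topspace subset_antisym)
qed

lemma qt_cont_q: "continuous_map T (quotient_topology T q) q"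
  unfolding continuous_map_def
proof (intro conjI allI impI)
  fix U assume "openin (quotient_topology T q) U"
  then show "openin T {x \<in> topspace T. q x \<in> U}" by (simp add: qt_open)
next
  show "q \<in> topspace T \<rightarrow> topspace (quotient_topology T q)" by (auto simp: qt_topspace)
qed

lemma qt_cont_from:
  assumes "continuous_map T Z (\<lambda>x. h (q x))"
  shows "continuous_map (quotient_topology T q) Z h"
  unfolding continuous_map_def
proof (intro conjI allI impI)
  show "h \<in> topspace (quotient_topology T q) \<rightarrow> topspace Z"
    using assms by (auto simp: qt_topspace continuous_map_def)
  fix V assume V: "openin Z V"
  have "{x \<in> topspace T. q x \<in> {x \<in> topspace (quotient_topology T q). h x \<in> V}} = {x \<in> topspace T. h (q x) \<in> V}"
    by (auto simp: qt_topspace)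
  moreover have "openin T {x \<in> topspace T. h (q x) \<in> V}"
    using assms V by (auto simp: continuous_map_def)
  moreover have "{x \<in> topspace (quotient_topology T q). h x \<in> V} \<subseteq> q ` topspace T"
    by (auto simp: qt_topspace)
  ultimately show "openin (quotient_topology T q) {x \<in> topspace (quotient_topology T q). h x \<in> V}"
    by (simp only: qt_open)
qed

lemma co_topspace: "topspace (compact_open X Y) = cmap_space X Y"
proof -
  have "UNIV \<in> {{f. f ` K \<subseteq> U} | K U. compactin X K \<and> openin Y U}"
    by (rule CollectI, rule exI[of _ "{}"], rule exI[of _ "topspace Y"]) auto
  then show ?thesis unfolding compact_open_def by auto
qed

lemma co_open:
  assumes "compactin X K" "openin Y U"
  shows "openin (compact_open X Y) {f \<in> cmap_space X Y. f ` K \<subseteq> U}"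
proof -
  have "openin (topology_generated_by {{f. f ` K \<subseteq> U} | K U. compactin X K \<and> openin Y U}) {f. f ` K \<subseteq> U}"
    using assms by (intro topology_generated_by_Basis) blast
  moreover have "{f \<in> cmap_space X Y. f ` K \<subseteq> U} = {f. f ` K \<subseteq> U} \<inter> cmap_space X Y" by auto
  ultimately show ?thesis unfolding compact_open_def openin_subtopology by blast
qed

lemma co_cont:
  assumes "\<phi> ` topspace Z \<subseteq> cmap_space X Y"
    and "\<And>K U. compactin X K \<Longrightarrow> openin Y U \<Longrightarrow> openin Z {z \<in> topspace Z. \<phi> z ` K \<subseteq> U}"
  shows "continuous_map Z (compact_open X Y) \<phi>"
proof -
  let ?S = "{{f. f ` K \<subseteq> U} | K U. compactin X K \<and> openin Y U}"
  have "continuous_map Z (topology_generated_by ?S) \<phi>"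
  proof (rule continuous_on_generated_topo)
    fix S assume "S \<in> ?S"
    then obtain K U where "S = {f. f ` K \<subseteq> U}" "compactin X K" "openin Y U" by blast
    moreover have "\<phi> -` {f. f ` K \<subseteq> U} \<inter> topspace Z = {z \<in> topspace Z. \<phi> z ` K \<subseteq> U}" by auto
    ultimately show "openin Z (\<phi> -` S \<inter> topspace Z)" using assms(2) by auto
  next
    have "UNIV \<in> ?S"
      by (rule CollectI, rule exI[of _ "{}"], rule exI[of _ "topspace Y"]) auto
    then show "\<phi> ` topspace Z \<subseteq> \<Union> ?S" by auto
  qed
  then show ?thesis unfolding compact_open_def continuous_map_in_subtopology using assms(1) by auto
qed


lemma Ypos_top: "topspace Ypos = {0<..}"
  by (simp add: Ypos_def)

lemma Ypos_open: "openin Ypos U \<longleftrightarrow> open U \<and> U \<subseteq> {0<..}"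
  unfolding Ypos_def by (simp add: openin_open_eq)

lemma shift_shift: "shift_fun X k (shift_fun X j g) = shift_fun X (k + j) g"
  by (auto simp: shift_fun_def restrict_def fun_eq_iff)

lemma shift_0: "g \<in> extensional (topspace X) \<Longrightarrow> shift_fun X 0 g = g"
  by (auto simp: shift_fun_def restrict_def fun_eq_iff extensional_def)

lemma shift_cancel: "g \<in> extensional (topspace X) \<Longrightarrow> shift_fun X k (shift_fun X (-k) g) = g"
  by (simp add: shift_shift shift_0)

lemma shift_eq_iff: "shift_fun X a g = shift_fun X b f \<longleftrightarrow> shift_fun X (a + k) g = shift_fun X (b + k) f"
  by (metis add.commute add_diff_cancel_left' diff_conv_add_uminus shift_shift)

lemma shift_cmap:
  assumes "continuous_map X euclideanreal f"
  shows "shift_fun X n f \<in> cmap_space X euclideanreal"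
proof -
  have "continuous_map X euclideanreal (\<lambda>x. f x + real_of_int n)"
    using assms by (intro continuous_map_add) auto
  then have "continuous_map X euclideanreal (shift_fun X n f)"
    by (rule continuous_map_eq) (simp add: shift_fun_def)
  then show ?thesis by (simp add: cmap_space_def shift_fun_def)
qed

lemma cmapY_iff: "f \<in> cmap_space X Ypos \<longleftrightarrow> f \<in> cmap_space X euclideanreal \<and> (\<forall>x\<in>topspace X. f x > 0)"
  by (auto simp: cmap_space_def Ypos_def continuous_map_in_subtopology)

lemma shift_cont1: "continuous_map (compact_open X Ypos) (compact_open X euclideanreal) (shift_fun X n)"
proof (rule co_cont)
  show "shift_fun X n ` topspace (compact_open X Ypos) \<subseteq> cmap_space X euclideanreal"
  proof
    fix F assume "F \<in> shift_fun X n ` topspace (compact_open X Ypos)"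
    then obtain f where "f \<in> cmap_space X Ypos" "F = shift_fun X n f" by (auto simp: co_topspace)
    then have "continuous_map X euclideanreal f" using cmapY_iff[of f X] by (simp add: cmap_space_def)
    then show "F \<in> cmap_space X euclideanreal"
      using shift_cmap[of X f n] \<open>F = _\<close> by simp
  qed
next
  fix K U assume K: "compactin X K" and U: "openin euclideanreal U"
  define V where "V = {y. y + real_of_int n \<in> U} \<inter> {0<..}"
  have "open ((\<lambda>y. y + real_of_int n) -` U)"
    using U by (intro continuous_open_vimage) auto
  then have "open {y. y + real_of_int n \<in> U}" by (simp add: vimage_def)
  then have "openin Ypos V" unfolding V_def Ypos_open by auto
  then have "openin (compact_open X Ypos) {f \<in> cmap_space X Ypos. f ` K \<subseteq> V}"
    using co_open[OF K] by blast
  moreover have "{f \<in> cmap_space X Ypos. f ` K \<subseteq> V} = {z \<in> topspace (compact_open X Ypos). shift_fun X n z ` K \<subseteq> U}"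
    using compactin_subset_topspace[OF K]
    by (auto simp: co_topspace V_def shift_fun_def cmapY_iff subset_iff)
  ultimately show "openin (compact_open X Ypos) {z \<in> topspace (compact_open X Ypos). shift_fun X n z ` K \<subseteq> U}"
    by simp
qed

definition Wset :: "'a topology \<Rightarrow> int \<Rightarrow> ('a \<Rightarrow> real) set" where
  "Wset X n = {F \<in> cmap_space X euclideanreal. F ` topspace X \<subseteq> {real_of_int n<..}}"

lemma Wset_open: "compact_space X \<Longrightarrow> openin (compact_open X euclideanreal) (Wset X n)"
  unfolding Wset_def by (rule co_open) (auto simp: compact_space_def)

lemma shift_cont2: "continuous_map (subtopology (compact_open X euclideanreal) (Wset X n)) (compact_open X Ypos) (shift_fun X (-n))"
proof (rule co_cont)
  show "shift_fun X (-n) ` topspace (subtopology (compact_open X euclideanreal) (Wset X n)) \<subseteq> cmap_space X Ypos"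
  proof
    fix G assume "G \<in> shift_fun X (-n) ` topspace (subtopology (compact_open X euclideanreal) (Wset X n))"
    then obtain F where F: "F \<in> Wset X n" "G = shift_fun X (-n) F" by (auto simp: co_topspace)
    then have "G \<in> cmap_space X euclideanreal"
      using shift_cmap[of X F "-n"] by (auto simp: Wset_def cmap_space_def)
    moreover have "\<forall>x\<in>topspace X. G x > 0" using F by (auto simp: Wset_def shift_fun_def)
    ultimately show "G \<in> cmap_space X Ypos" by (simp add: cmapY_iff)
  qed
next
  fix K U assume K: "compactin X K" and U: "openin Ypos U"
  define V where "V = {y. y - real_of_int n \<in> U}"
  have "open U" using U by (simp add: Ypos_open)
  then have "open ((\<lambda>y. y - real_of_int n) -` U)"
    by (intro continuous_open_vimage) auto
  then have "open V" by (simp add: vimage_def V_def)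
  then have "openin (compact_open X euclideanreal) {f \<in> cmap_space X euclideanreal. f ` K \<subseteq> V}"
    using K by (intro co_open) auto
  moreover have "{z \<in> topspace (subtopology (compact_open X euclideanreal) (Wset X n)). shift_fun X (-n) z ` K \<subseteq> U}
     = Wset X n \<inter> {f \<in> cmap_space X euclideanreal. f ` K \<subseteq> V}"
    using compactin_subset_topspace[OF K]
    by (auto simp: co_topspace V_def shift_fun_def Wset_def subset_iff)
  ultimately show "openin (subtopology (compact_open X euclideanreal) (Wset X n)) {z \<in> topspace (subtopology (compact_open X euclideanreal) (Wset X n)). shift_fun X (-n) z ` K \<subseteq> U}"
    by (metis openin_subtopology_Int2)
qed


lemma shift_W_CM: "F \<in> Wset X n \<Longrightarrow> shift_fun X (-n) F \<in> cmap_space X Ypos"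
proof -
  assume F: "F \<in> Wset X n"
  then have "shift_fun X (-n) F \<in> cmap_space X euclideanreal"
    using shift_cmap[of X F "-n"] by (auto simp: Wset_def cmap_space_def)
  moreover have "\<forall>x\<in>topspace X. shift_fun X (-n) F x > 0" using F by (auto simp: Wset_def shift_fun_def)
  ultimately show ?thesis by (simp add: cmapY_iff)
qed

lemma env_class:
  assumes f: "f \<in> cmap_space X Ypos"
  shows "env_rel (CXY_dom X) (shift_fun X) `` {(n,f)} = {(m,g). g \<in> cmap_space X Ypos \<and> shift_fun X m g = shift_fun X n f}"
proof (intro set_eqI iffI)
  fix p assume "p \<in> env_rel (CXY_dom X) (shift_fun X) `` {(n,f)}"
  then obtain m g where p: "p = (m,g)" and fD: "f \<in> CXY_dom X (m - n)" and g: "g = shift_fun X (n - m) f"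
    by (auto simp: env_rel_def)
  have fc: "continuous_map X euclideanreal f" using f cmapY_iff[of f X] by (simp add: cmap_space_def)
  have "g \<in> cmap_space X euclideanreal" using shift_cmap[OF fc] g by simp
  moreover have "\<forall>x\<in>topspace X. g x > 0" using fD g by (auto simp: CXY_dom_def shift_fun_def)
  ultimately have "g \<in> cmap_space X Ypos" by (simp add: cmapY_iff)
  moreover have "shift_fun X m g = shift_fun X n f" using g by (simp add: shift_shift)
  ultimately show "p \<in> {(m,g). g \<in> cmap_space X Ypos \<and> shift_fun X m g = shift_fun X n f}" using p by simp
next
  fix p assume "p \<in> {(m,g). g \<in> cmap_space X Ypos \<and> shift_fun X m g = shift_fun X n f}"
  then obtain m g where p: "p = (m,g)" and g: "g \<in> cmap_space X Ypos" and eq: "shift_fun X m g = shift_fun X n f"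
    by auto
  have "\<forall>x\<in>topspace X. f x > max 0 (real_of_int (m - n))"
  proof
    fix x assume x: "x \<in> topspace X"
    have "g x + m = f x + n" using fun_cong[OF eq, of x] x by (simp add: shift_fun_def)
    moreover have "g x > 0" "f x > 0" using g f x by (auto simp: cmapY_iff)
    ultimately show "f x > max 0 (real_of_int (m - n))" by auto
  qed
  then have "f \<in> CXY_dom X (m - n)" using f by (simp add: CXY_dom_def)
  moreover have "shift_fun X (n - m) f = g"
  proof -
    have "shift_fun X (n - m) f = shift_fun X (-m) (shift_fun X n f)" by (simp add: shift_shift)
    also have "\<dots> = shift_fun X (-m) (shift_fun X m g)" using eq by simp
    also have "\<dots> = g" using g by (simp add: shift_shift shift_0 cmap_space_def)
    finally show ?thesis .
  qed
  ultimately show "p \<in> env_rel (CXY_dom X) (shift_fun X) `` {(n,f)}" using p by (simp add: env_rel_def)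
qed

lemma prod_disc_cont:
  assumes "\<And>n. continuous_map Z Y (\<phi> n)"
  shows "continuous_map (prod_topology (discrete_topology UNIV) Z) Y (\<lambda>p. \<phi> (fst p) (snd p))"
  unfolding continuous_map_def
proof (intro conjI allI impI)
  show "(\<lambda>p. \<phi> (fst p) (snd p)) \<in> topspace (prod_topology (discrete_topology UNIV) Z) \<rightarrow> topspace Y"
  proof
    fix p :: "'a \<times> 'b" assume "p \<in> topspace (prod_topology (discrete_topology UNIV) Z)"
    then have "snd p \<in> topspace Z" by auto
    then show "\<phi> (fst p) (snd p) \<in> topspace Y" using continuous_map_funspace[OF assms[of "fst p"]] by blast
  qed
  fix V assume V: "openin Y V"
  have "{x \<in> topspace (prod_topology (discrete_topology UNIV) Z). \<phi> (fst x) (snd x) \<in> V}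
     = (\<Union>n. {n} \<times> {z \<in> topspace Z. \<phi> n z \<in> V})" by auto
  moreover have "openin (prod_topology (discrete_topology UNIV) Z) (\<Union>n. {n} \<times> {z \<in> topspace Z. \<phi> n z \<in> V})"
    using assms V by (intro openin_Union) (auto simp: openin_prod_Times_iff continuous_map_def)
  ultimately show "openin (prod_topology (discrete_topology UNIV) Z) {x \<in> topspace (prod_topology (discrete_topology UNIV) Z). \<phi> (fst x) (snd x) \<in> V}"
    by simp
qed

lemma lower_int_bound:
  assumes X: "compact_space X" and F: "F \<in> cmap_space X euclideanreal"
  shows "F \<in> Wset X (\<lfloor>Inf (F ` topspace X)\<rfloor> - 1)"
proof -
  have "compactin euclideanreal (F ` topspace X)"
    using X F by (intro image_compactin) (auto simp: compact_space_def cmap_space_def)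
  then have "bdd_below (F ` topspace X)"
    by (simp add: bounded_imp_bdd_below compact_imp_bounded)
  then have "\<And>x. x \<in> topspace X \<Longrightarrow> Inf (F ` topspace X) \<le> F x" by (simp add: cInf_lower)
  moreover have "real_of_int (\<lfloor>Inf (F ` topspace X)\<rfloor> - 1) < Inf (F ` topspace X)"
    by linarith
  ultimately show ?thesis using F by (force simp: Wset_def)
qed


theorem theorem3p13:
  fixes X :: "'a topology"
  assumes "compact_space X"
  shows "\<exists>h. homeomorphic_map
               (env_space (compact_open X Ypos) (CXY_dom X) (shift_fun X))
               (compact_open X euclideanreal) h
           \<and> (\<forall>k c. c \<in> topspace (env_space (compact_open X Ypos) (CXY_dom X) (shift_fun X))
                 \<longrightarrow> h (env_act k c) = shift_fun X k (h c))"
proof -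
  define CM where "CM = cmap_space X Ypos"
  define q where "q = (\<lambda>p. env_rel (CXY_dom X) (shift_fun X) `` {p})"
  define T where "T = prod_topology (discrete_topology (UNIV :: int set)) (compact_open X Ypos)"
  define C where "C = compact_open X euclideanreal"
  have E: "env_space (compact_open X Ypos) (CXY_dom X) (shift_fun X) = quotient_topology T q"
    by (simp add: env_space_def q_def T_def)
  have topT: "topspace T = UNIV \<times> CM" by (simp add: T_def co_topspace CM_def)
  have topE: "topspace (quotient_topology T q) = q ` (UNIV \<times> CM)" by (simp add: qt_topspace topT)
  have qcl: "q (n, f) = {(m,g). g \<in> CM \<and> shift_fun X m g = shift_fun X n f}" if "f \<in> CM" for n f
    using env_class[of f X n] that by (simp add: q_def CM_def)
  have qeq: "q (n, f) = q (m, g)" if "f \<in> CM" "g \<in> CM" "shift_fun X n f = shift_fun X m g" for n m f g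
    using that by (simp add: qcl)
  define h where "h c = (\<lambda>(n,f). shift_fun X n f) (SOME p. p \<in> c)" for c :: "(int \<times> ('a \<Rightarrow> real)) set"
  have hq: "h (q (n, f)) = shift_fun X n f" if "f \<in> CM" for n f
  proof -
    have "(n, f) \<in> q (n, f)" using that by (simp add: qcl)
    then have "(SOME p. p \<in> q (n, f)) \<in> q (n, f)" by (rule someI)
    moreover obtain a b where ab: "(SOME p. p \<in> q (n, f)) = (a, b)" by fastforce
    ultimately have "shift_fun X a b = shift_fun X n f" using that by (simp add: qcl)
    then show ?thesis by (simp add: h_def ab)
  qed
  define nF where "nF F = \<lfloor>Inf (F ` topspace X)\<rfloor> - 1" for F :: "'a \<Rightarrow> real"
  define g where "g F = q (nF F, shift_fun X (- nF F) F)" for F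
  have inW: "F \<in> Wset X (nF F)" if "F \<in> cmap_space X euclideanreal" for F
    using lower_int_bound[OF assms that] by (simp add: nF_def)
  have canc: "shift_fun X i (shift_fun X (-i) F) = F" if "F \<in> cmap_space X euclideanreal" for i F
    using that by (simp add: shift_cancel cmap_space_def)
  have hcont: "continuous_map (quotient_topology T q) C h"
  proof (rule qt_cont_from)
    have "continuous_map T C (\<lambda>p. shift_fun X (fst p) (snd p))"
      unfolding T_def C_def by (rule prod_disc_cont) (rule shift_cont1)
    then show "continuous_map T C (\<lambda>x. h (q x))"
      by (rule continuous_map_eq) (auto simp: topT hq)
  qed
  have gcont: "continuous_map C (quotient_topology T q) g"
  proof (rule pasting_lemma[where I = UNIV and T = "Wset X" and f = "\<lambda>i F. q (i, shift_fun X (-i) F)"])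
    fix i :: int
    show "openin C (Wset X i)" unfolding C_def by (rule Wset_open[OF assms])
    have "continuous_map (subtopology C (Wset X i)) T (\<lambda>F. (i, shift_fun X (-i) F))"
      unfolding continuous_map_paired T_def C_def using shift_cont2[of X i] by simp
    then show "continuous_map (subtopology C (Wset X i)) (quotient_topology T q) (\<lambda>F. q (i, shift_fun X (-i) F))"
      using qt_cont_q by (rule continuous_map_compose[unfolded o_def])
  next
    fix i j :: int and F assume F: "F \<in> topspace C \<inter> Wset X i \<inter> Wset X j"
    then have "F \<in> cmap_space X euclideanreal" by (simp add: C_def co_topspace)
    then show "q (i, shift_fun X (-i) F) = q (j, shift_fun X (-j) F)"
      using F by (intro qeq) (auto simp: CM_def shift_W_CM canc)
  next
    fix F assume "F \<in> topspace C"
    then have "F \<in> cmap_space X euclideanreal" by (simp add: C_def co_topspace)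
    then show "\<exists>j. j \<in> UNIV \<and> F \<in> Wset X j \<and> g F = q (j, shift_fun X (-j) F)"
      using inW by (auto simp: g_def)
  qed
  have gh: "g (h c) = c" if cE: "c \<in> topspace (quotient_topology T q)" for c
  proof -
    obtain n f where c: "c = q (n, f)" and f: "f \<in> CM" using cE topE by auto
    have F: "shift_fun X n f \<in> cmap_space X euclideanreal"
      using f shift_cmap[of X f n] cmapY_iff[of f X] by (simp add: CM_def cmap_space_def)
    have "g (h c) = q (nF (shift_fun X n f), shift_fun X (- nF (shift_fun X n f)) (shift_fun X n f))"
      using f by (simp add: c hq g_def)
    also have "\<dots> = q (n, f)"
      using F f inW[OF F] by (intro qeq) (auto simp: CM_def shift_W_CM canc)
    finally show ?thesis using c by simp
  qed
  have hg: "h (g F) = F" if "F \<in> topspace C" for F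
  proof -
    have F: "F \<in> cmap_space X euclideanreal" using that by (simp add: C_def co_topspace)
    show ?thesis using F inW[OF F] by (simp add: g_def hq CM_def shift_W_CM canc)
  qed
  have equi: "h (env_act k c) = shift_fun X k (h c)" if cE: "c \<in> topspace (quotient_topology T q)" for k c
  proof -
    obtain n f where c: "c = q (n, f)" and f: "f \<in> CM" using cE topE by auto
    have "env_act k c = q (k + n, f)"
    proof (intro set_eqI iffI)
      fix p assume "p \<in> env_act k c"
      then obtain a b where p: "p = (k + a, b)" and b: "b \<in> CM" and eq: "shift_fun X a b = shift_fun X n f"
        using f by (auto simp: env_act_def c qcl)
      have "shift_fun X (a + k) b = shift_fun X (n + k) f" using eq shift_eq_iff by blast
      then show "p \<in> q (k + n, f)" using p b f by (simp add: qcl add.commute)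
    next
      fix p assume "p \<in> q (k + n, f)"
      then obtain m b where p: "p = (m, b)" and b: "b \<in> CM" and eq: "shift_fun X m b = shift_fun X (k + n) f"
        using f by (auto simp: qcl)
      have "shift_fun X (m - k) b = shift_fun X n f"
        using eq shift_eq_iff[of X "m - k" b n f k] by (simp add: add.commute)
      then have "(m - k, b) \<in> c" using b f by (simp add: c qcl)
      moreover have "p = (\<lambda>(a, b). (k + a, b)) (m - k, b)" using p by simp
      ultimately show "p \<in> env_act k c" unfolding env_act_def by blast
    qed
    then show ?thesis using f by (simp add: c hq shift_shift)
  qed
  have "homeomorphic_maps (quotient_topology T q) C h g"
    unfolding homeomorphic_maps_def using hcont gcont gh hg by blast
  then have "homeomorphic_map (quotient_topology T q) C h"
    using homeomorphic_map_maps by blast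
  then show ?thesis using equi by (auto simp: E C_def)
qed

end
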